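(* For every integer $l\ge 0$, the ideal $I_l\subset\mathbb{Z}[q,q^{-1}]$ is principal; it equals $g_l\,\mathbb{Z}[q,q^{-1}]$, where $g_l=\mathrm{GCD}(f_{l,0},\dots,f_{l,l})$. Moreover, up to a unit of $\mathbb{Z}[q,q^{-1}]$, $$g_l=\prod_{m\ge 1}\Phi_m^{t_{l,m}},\qquad t_{l,m}=\begin{cases}\lfloor \tfrac{l+1}{m}\rfloor-1 & \text{for } 1\le m\le l,\\ 0 & \text{for } m>l.\end{cases}$$
   Context: Work in the ring $\mathbb{Z}[q,q^{-1}]$ of Laurent polynomials, a unique factorization domain whose units are $\pm q^j$. For $i\in\mathbb{Z}$ and $n\ge 0$ set $\{i\}_q=q^i-1$, $\{i\}_{q,n}=\{i\}_q\{i-1\}_q\cdots\{i-n+1\}_q$ (the empty product, equal to $1$, when $n=0$), and $\{n\}_q!=\{n\}_{q,n}$ (so $\{0\}_q!=1$). For $0\le k\le l$ set $f_{l,k}=\{l-k\}_q!\,\{k\}_q!$, and let $I_l$ be the ideal of $\mathbb{Z}[q,q^{-1}]$ generated by $f_{l,0},\dots,f_{l,l}$. $\mathrm{GCD}$ denotes a greatest common divisor in $\mathbb{Z}[q,q^{-1}]$ (defined up to units). $\Phi_m=\prod_{d\mid m}(q^d-1)^{\mu(m/d)}$ is the $m$th cyclotomic polynomial ($\mu$ the Möbius function), and $\lfloor r\rfloor$ is the largest integer $\le r$. *)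

theory Defs
  imports "HOL-Computational_Algebra.Computational_Algebra"
begin

text \<open>The ring Z[q,q^-1] is realised as the subring LP of the field of formal
Laurent series over the rationals consisting of series with finite support
and integer coefficients; q is fls_X (so q^i is fls_X_intpow i).  Working inside the field allows the
literal definition of cyclotomic polynomials with integer (Moebius) exponents.\<close>

definition LP :: "rat fls set" where
  "LP = {x. finite {n. fls_nth x n \<noteq> 0} \<and> (\<forall>n. fls_nth x n \<in> \<int>)}"


definition qbr :: "int \<Rightarrow> rat fls" where
  "qbr i = fls_X_intpow i - 1"

definition qbrn :: "int \<Rightarrow> nat \<Rightarrow> rat fls" where
  "qbrn i n = (\<Prod>j<n. qbr (i - int j))"

definition qfact :: "nat \<Rightarrow> rat fls" where
  "qfact n = qbrn (int n) n"

definition fq :: "nat \<Rightarrow> nat \<Rightarrow> rat fls" where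
  "fq l k = qfact (l - k) * qfact k"

definition Iq :: "nat \<Rightarrow> rat fls set" where
  "Iq l = {x. \<exists>c. (\<forall>k\<le>l. c k \<in> LP) \<and> x = (\<Sum>k\<le>l. c k * fq l k)}"

definition ldvd :: "rat fls \<Rightarrow> rat fls \<Rightarrow> bool" where
  "ldvd a b \<longleftrightarrow> (\<exists>c\<in>LP. b = a * c)"

definition lunit :: "rat fls \<Rightarrow> bool" where
  "lunit u \<longleftrightarrow> u \<in> LP \<and> (\<exists>v\<in>LP. u * v = 1)"

definition is_lgcd :: "rat fls \<Rightarrow> nat \<Rightarrow> bool" where
  "is_lgcd g l \<longleftrightarrow> g \<in> LP \<and> (\<forall>k\<le>l. ldvd g (fq l k)) \<and>
     (\<forall>d\<in>LP. (\<forall>k\<le>l. ldvd d (fq l k)) \<longrightarrow> ldvd d g)"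

definition moebius :: "nat \<Rightarrow> int" where
  "moebius n = (if squarefree n then (-1) ^ card (prime_factors n) else 0)"

definition cyclo :: "nat \<Rightarrow> rat fls" where
  "cyclo m = (\<Prod>d\<in>{d. d dvd m}. (fls_X_intpow (int d) - 1) powi moebius (m div d))"

definition texp :: "nat \<Rightarrow> nat \<Rightarrow> int" where
  "texp l m = (if 1 \<le> m \<and> m \<le> l then \<lfloor>real (l + 1) / real m\<rfloor> - 1 else 0)"

end

theory Submission
  imports Defs
begin
unbundle fps_syntax



definition FS :: "rat fls set" where "FS = {x. finite {n. x $$ n \<noteq> 0}}"
definition ZC :: "rat fls set" where "ZC = {x. \<forall>n. x $$ n \<in> \<int>}"

lemma LP_eq: "LP = FS \<inter> ZC" by (auto simp: LP_def FS_def ZC_def)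

definition subr :: "rat fls set \<Rightarrow> bool" where
 "subr R \<longleftrightarrow> (\<forall>x\<in>R. \<forall>y\<in>R. x + y \<in> R \<and> x * y \<in> R \<and> - x \<in> R) \<and> (\<forall>i. fls_X_intpow i \<in> R)"

lemma subr_add: "subr R \<Longrightarrow> x \<in> R \<Longrightarrow> y \<in> R \<Longrightarrow> x + y \<in> R" by (simp add: subr_def)
lemma subr_mult: "subr R \<Longrightarrow> x \<in> R \<Longrightarrow> y \<in> R \<Longrightarrow> x * y \<in> R" by (simp add: subr_def)
lemma subr_uminus: "subr R \<Longrightarrow> x \<in> R \<Longrightarrow> - x \<in> R" by (simp add: subr_def)
lemma subr_X: "subr R \<Longrightarrow> fls_X_intpow i \<in> R" by (simp add: subr_def)
lemma subr_one: "subr R \<Longrightarrow> 1 \<in> R" using subr_X[of R 0] by simp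
lemma subr_zero: "subr R \<Longrightarrow> 0 \<in> R"
  using subr_add[OF _ subr_one subr_uminus[OF _ subr_one], of R] by simp
lemma subr_diff: "subr R \<Longrightarrow> x \<in> R \<Longrightarrow> y \<in> R \<Longrightarrow> x - y \<in> R"
  using subr_add[of R x "-y"] subr_uminus[of R y] by simp
lemma subr_sum: "subr R \<Longrightarrow> (\<And>i. i \<in> A \<Longrightarrow> f i \<in> R) \<Longrightarrow> sum f A \<in> R"
  by (induction A rule: infinite_finite_induct) (auto intro: subr_zero subr_add)
lemma subr_prod: "subr R \<Longrightarrow> (\<And>i. i \<in> A \<Longrightarrow> f i \<in> R) \<Longrightarrow> prod f A \<in> R"
  by (induction A rule: infinite_finite_induct) (auto intro: subr_one subr_mult)
lemma subr_power: "subr R \<Longrightarrow> x \<in> R \<Longrightarrow> x ^ n \<in> R"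
  by (induction n) (auto intro: subr_one subr_mult)
lemma subr_of_nat: "subr R \<Longrightarrow> of_nat n \<in> R"
  by (induction n) (auto intro: subr_zero subr_one subr_add)
lemma subr_int: "subr R \<Longrightarrow> subr S \<Longrightarrow> subr (R \<inter> S)"
  unfolding subr_def by blast

lemma FS_mult: assumes "x \<in> FS" "y \<in> FS" shows "x * y \<in> FS"
proof -
  let ?A = "{n. x $$ n \<noteq> 0}" let ?B = "{n. y $$ n \<noteq> 0}"
  have "{n. (x*y) $$ n \<noteq> 0} \<subseteq> (\<lambda>(i,j). i+j) ` (?A \<times> ?B)"
  proof
    fix n assume "n \<in> {n. (x*y) $$ n \<noteq> 0}"
    then have "(\<Sum>i=fls_subdegree x..n - fls_subdegree y. x $$ i * y $$ (n - i)) \<noteq> 0"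
      by (simp add: fls_times_nth(2))
    then obtain i where "x $$ i * y $$ (n-i) \<noteq> 0" by (meson sum.neutral)
    then show "n \<in> (\<lambda>(i,j). i+j) ` (?A \<times> ?B)" by (auto intro!: image_eqI[of _ _ "(i, n-i)"])
  qed
  then show ?thesis using assms unfolding FS_def by (auto intro: finite_subset)
qed

lemma ZC_mult: assumes "x \<in> ZC" "y \<in> ZC" shows "x * y \<in> ZC"
  using assms unfolding ZC_def by (auto simp: fls_times_nth(2) intro!: Ints_mult)

lemma subr_FS: "subr FS"
  unfolding subr_def
proof (intro conjI ballI allI)
  fix x y assume x: "x \<in> FS" and y: "y \<in> FS"
  show "x * y \<in> FS" using FS_mult[OF x y] .
  have "{n. (x+y) $$ n \<noteq> 0} \<subseteq> {n. x $$ n \<noteq> 0} \<union> {n. y $$ n \<noteq> 0}" by auto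
  then show "x + y \<in> FS" using x y unfolding FS_def by (auto intro: finite_subset)
  show "- x \<in> FS" using x unfolding FS_def by simp
next
  fix i :: int
  have "{n. fls_X_intpow i $$ n \<noteq> (0::rat)} \<subseteq> {i}" by auto
  then show "fls_X_intpow i \<in> FS" unfolding FS_def by (auto intro: finite_subset)
qed

lemma subr_ZC: "subr ZC"
  unfolding subr_def ZC_def
  by (auto intro!: Ints_mult simp: fls_times_nth(2))

lemma subr_LP: "subr LP"
  using subr_int[OF subr_FS subr_ZC] LP_eq by simp

lemma FS_const: "fls_const c \<in> FS"
proof -
  have "{n. fls_const c $$ n \<noteq> 0} \<subseteq> {0}" by auto
  then show ?thesis unfolding FS_def by (auto intro: finite_subset)
qed




definition dv :: "rat fls set \<Rightarrow> rat fls \<Rightarrow> rat fls \<Rightarrow> bool" where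
  "dv R a b \<longleftrightarrow> (\<exists>c\<in>R. b = a * c)"
definition cmx :: "rat fls set \<Rightarrow> rat fls \<Rightarrow> rat fls \<Rightarrow> bool" where
  "cmx R a b \<longleftrightarrow> (\<exists>u\<in>R. \<exists>v\<in>R. u * a + v * b = 1)"

lemma dv_refl: "subr R \<Longrightarrow> dv R a a"
  unfolding dv_def using subr_one[of R] by force

lemma dv_trans: "subr R \<Longrightarrow> dv R a b \<Longrightarrow> dv R b c \<Longrightarrow> dv R a c"
  unfolding dv_def by (metis mult.assoc subr_mult)

lemma dv_mult_right: "subr R \<Longrightarrow> y \<in> R \<Longrightarrow> dv R a (a * y)"
  unfolding dv_def by blast

lemma dv_mult_left: "subr R \<Longrightarrow> y \<in> R \<Longrightarrow> dv R a (y * a)"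
  unfolding dv_def by (metis mult.commute)

lemma cmx_sym: "cmx R a b \<Longrightarrow> cmx R b a"
  unfolding cmx_def by (metis add.commute)

lemma cmx_dv: assumes R: "subr R" and "cmx R a b" "dv R x a" "dv R y b"
  shows "cmx R x y"
proof -
  obtain u v where uv: "u \<in> R" "v \<in> R" "u * a + v * b = 1" using assms(2) cmx_def by auto
  obtain c where c: "c \<in> R" "a = x * c" using assms(3) dv_def by auto
  obtain d where d: "d \<in> R" "b = y * d" using assms(4) dv_def by auto
  have "(u * c) * x + (v * d) * y = 1" using uv c d by (simp add: algebra_simps)
  then show ?thesis unfolding cmx_def using uv c d subr_mult[OF R] by blast
qed

lemma cmx_mult: assumes R: "subr R" and ab: "a \<in> R" "b \<in> R" "c \<in> R"
  and "cmx R a b" "cmx R a c" shows "cmx R a (b * c)"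
proof -
  obtain u1 v1 where 1: "u1 \<in> R" "v1 \<in> R" "u1 * a + v1 * b = 1" using assms(5) cmx_def by auto
  obtain u2 v2 where 2: "u2 \<in> R" "v2 \<in> R" "u2 * a + v2 * c = 1" using assms(6) cmx_def by auto
  have "(u1 * u2 * a + u1 * v2 * c + v1 * b * u2) * a + (v1 * v2) * (b * c) = (u1 * a + v1 * b) * (u2 * a + v2 * c)"
    by (simp add: algebra_simps)
  also have "\<dots> = 1" using 1 2 by simp
  finally show ?thesis unfolding cmx_def
    using 1 2 ab by (intro bexI[of _ "u1 * u2 * a + u1 * v2 * c + v1 * b * u2"] bexI[of _ "v1 * v2"])
      (auto intro!: subr_add subr_mult R)
qed

lemma cmx_one: "subr R \<Longrightarrow> cmx R a 1"
  unfolding cmx_def using subr_zero[of R] subr_one[of R] by force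

lemma cmx_prod: assumes R: "subr R" and "a \<in> R" "\<And>i. i \<in> S \<Longrightarrow> f i \<in> R" "\<And>i. i \<in> S \<Longrightarrow> cmx R a (f i)"
  shows "cmx R a (prod f S)"
  using assms(3,4)
proof (induction S rule: infinite_finite_induct)
  case (infinite A) then show ?case using cmx_one[OF R] by simp
next
  case empty then show ?case using cmx_one[OF R] by simp
next
  case (insert x F)
  then show ?case by (simp add: cmx_mult[OF R assms(2)] subr_prod[OF R])
qed

lemma dv_mult_cmx: assumes R: "subr R" and "cmx R a b" "dv R a c" "dv R b c"
  shows "dv R (a * b) c"
proof -
  obtain u v where uv: "u \<in> R" "v \<in> R" "u * a + v * b = 1" using assms(2) cmx_def by auto
  obtain c1 where c1: "c1 \<in> R" "c = a * c1" using assms(3) dv_def by auto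
  obtain c2 where c2: "c2 \<in> R" "c = b * c2" using assms(4) dv_def by auto
  have "c = (u * a + v * b) * c" using uv by simp
  also have "\<dots> = u * a * (b * c2) + v * b * (a * c1)" using c1 c2 by (simp add: algebra_simps)
  also have "\<dots> = (a * b) * (u * c2 + v * c1)" by (simp add: algebra_simps)
  finally show ?thesis unfolding dv_def using uv c1 c2 R by (auto intro!: subr_add subr_mult)
qed

lemma dv_prod: assumes R: "subr R" and "finite S"
  and "\<And>i. i \<in> S \<Longrightarrow> f i \<in> R" "\<And>i. i \<in> S \<Longrightarrow> dv R (f i) c" and cR: "c \<in> R"
  and "\<And>i j. i \<in> S \<Longrightarrow> j \<in> S \<Longrightarrow> i \<noteq> j \<Longrightarrow> cmx R (f i) (f j)"
  shows "dv R (prod f S) c"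
  using assms(2-6)
proof (induction S rule: finite_induct)
  case empty then show ?case unfolding dv_def using cR by simp
next
  case (insert x F)
  have "cmx R (f x) (prod f F)"
    using insert by (intro cmx_prod[OF R]) auto
  then show ?case using insert by (simp add: dv_mult_cmx[OF R])
qed

abbreviation qb :: "nat \<Rightarrow> rat fls" where "qb n \<equiv> qbr (int n)"

lemma X_add: "fls_X_intpow (int (a + b)) = fls_X_intpow (int a) * (fls_X_intpow (int b) :: rat fls)"
  by (simp add: fls_X_intpow_times_fls_X_intpow)

lemma qb_in: "subr R \<Longrightarrow> qb n \<in> R"
  unfolding qbr_def by (intro subr_diff subr_X subr_one)

lemma euclid_aux: assumes R: "subr R"
  shows "\<exists>u\<in>R. \<exists>v\<in>R. u * qb a + v * qb b = qb (gcd a b)"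
proof (induction "a + b" arbitrary: a b rule: less_induct)
  case less
  show ?case
  proof (cases "a = 0 \<or> b = 0")
    case True
    then show ?thesis
    proof
      assume "a = 0" then show ?thesis using subr_zero[OF R] subr_one[OF R]
        by (intro bexI[of _ 0] bexI[of _ 1]) (auto simp: qbr_def)
    next
      assume "b = 0" then show ?thesis using subr_zero[OF R] subr_one[OF R]
        by (intro bexI[of _ 0] bexI[of _ 1]) (auto simp: qbr_def)
    qed
  next
    case False
    show ?thesis
    proof (cases "b \<le> a")
      case True
      then obtain u v where uv: "u \<in> R" "v \<in> R" "u * qb (a - b) + v * qb b = qb (gcd (a - b) b)"
        using less[of "a - b" b] False by auto
      have g: "gcd (a - b) b = gcd a b" using True by (metis gcd_diff1_nat)
      have e: "qb (a - b) = qb a - fls_X_intpow (int (a - b)) * qb b"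
        using X_add[of "a - b" b] True by (simp add: qbr_def algebra_simps)
      have "u * qb a + (v - u * fls_X_intpow (int (a - b))) * qb b = qb (gcd a b)"
        using uv(3) g e by (simp add: algebra_simps)
      then show ?thesis using uv R by (intro bexI[of _ u] bexI[of _ "v - u * fls_X_intpow (int (a - b))"])
          (auto intro!: subr_diff subr_mult subr_X)
    next
      case False2: False
      then obtain u v where uv: "u \<in> R" "v \<in> R" "u * qb (b - a) + v * qb a = qb (gcd (b - a) a)"
        using less[of "b - a" a] False by auto
      have g: "gcd (b - a) a = gcd a b" using False2 by (metis gcd.commute gcd_diff1_nat less_or_eq_imp_le not_le)
      have e: "qb (b - a) = qb b - fls_X_intpow (int (b - a)) * qb a"
        using X_add[of "b - a" a] False2 by (simp add: qbr_def algebra_simps)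
      have "(v - u * fls_X_intpow (int (b - a))) * qb a + u * qb b = qb (gcd a b)"
        using uv(3) g e by (simp add: algebra_simps)
      then show ?thesis using uv R by (intro bexI[of _ "v - u * fls_X_intpow (int (b - a))"] bexI[of _ u])
          (auto intro!: subr_diff subr_mult subr_X)
    qed
  qed
qed

lemma geom1: assumes R: "subr R" and y: "y \<in> R"
  shows "\<exists>s\<in>R. y ^ k - 1 = (y - 1) * (of_nat k + (y - 1) * s)"
proof (induction k)
  case 0 then show ?case using subr_zero[OF R] by auto
next
  case (Suc k)
  then obtain s where s: "s \<in> R" "y ^ k - 1 = (y - 1) * (of_nat k + (y - 1) * s)" by auto
  have "y ^ Suc k - 1 = y * (y ^ k - 1) + (y - 1)" by (simp add: algebra_simps)
  also have "\<dots> = y * ((y - 1) * (of_nat k + (y - 1) * s)) + (y - 1)"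
    using s(2) by simp
  also have "\<dots> = (y - 1) * (of_nat (Suc k) + (y - 1) * (of_nat k + y * s))"
    by (simp add: algebra_simps)
  finally show ?case using s R y by (intro bexI[of _ "of_nat k + y * s"]) (auto intro!: subr_add subr_mult subr_of_nat)
qed

lemma qb_mult: "qb (g * k) = (fls_X_intpow (int g)) ^ k - 1"
  by (simp add: qbr_def fls_X_intpow_power mult.commute)

lemma qb_nonzero: assumes "n > 0" shows "qb n \<noteq> 0"
proof
  assume "qb n = 0"
  then have "(fls_X_intpow (int n) :: rat fls) $$ int n = 1 $$ int n" by (simp add: qbr_def)
  then show False using assms by simp
qed

lemma qb_dv: assumes R: "subr R" and "d dvd m" shows "dv R (qb d) (qb m)"
proof -
  obtain k where k: "m = d * k" using assms(2) by auto
  let ?y = "fls_X_intpow (int d) :: rat fls"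
  have "qb m = (?y - 1) * (\<Sum>i<k. ?y ^ i)" unfolding k qb_mult by (simp add: power_diff_1_eq)
  then show ?thesis unfolding dv_def qbr_def using R
    by (intro bexI[of _ "\<Sum>i<k. ?y ^ i"]) (auto intro!: subr_sum subr_power subr_X)
qed




lemma moebius_mult_prime: assumes p: "prime p" and np: "\<not> p dvd c" and c: "c > 0"
  shows "moebius (p * c) = - moebius c"
proof -
  have cop: "coprime p c" using p np by (simp add: prime_imp_coprime)
  have sq: "squarefree (p * c) \<longleftrightarrow> squarefree c"
    using squarefree_mult_coprime[OF cop] squarefree_multD(2)[of p c] squarefree_prime[OF p] by blast
  have p0: "p \<noteq> 0" using p by auto
  have pf: "prime_factors (p * c) = insert p (prime_factors c)"
    using prime_factors_product[of p c] p0 c p by (simp add: prime_prime_factors)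
  have "p \<notin> prime_factors c" using np by (auto dest: in_prime_factors_imp_dvd)
  then show ?thesis unfolding moebius_def using sq pf by simp
qed

lemma moebius_sum: assumes N: "N > 0"
  shows "(\<Sum>c | c dvd N. moebius c) = (if N = 1 then 1 else 0)"
proof (cases "N = 1")
  case True
  then have "{c. c dvd N} = {1}" by auto
  then show ?thesis using True by (simp add: moebius_def)
next
  case False
  obtain p where p: "prime p" "p dvd N" using prime_factor_nat[OF False] by auto
  define D where "D = {c. c dvd N}"
  define A where "A = {c \<in> D. \<not> p dvd c}"
  define B where "B = {c \<in> D. p dvd c}"
  have fin: "finite D" using N unfolding D_def by simp
  have DAB: "D = A \<union> B" "A \<inter> B = {}" unfolding A_def B_def by auto
  have sD: "sum moebius D = sum moebius A + sum moebius B"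
    using fin DAB by (simp add: sum.union_disjoint)
  have Apos: "\<And>c. c \<in> A \<Longrightarrow> c > 0" using N unfolding A_def D_def by (auto intro!: Nat.gr0I)
  have sub: "(\<lambda>c. p * c) ` A \<subseteq> B"
  proof
    fix x assume "x \<in> (\<lambda>c. p * c) ` A"
    then obtain c where c: "c \<in> A" "x = p * c" by auto
    have "coprime p c" using c p unfolding A_def by (simp add: prime_imp_coprime)
    then have "p * c dvd N" using c p unfolding A_def D_def by (simp add: divides_mult)
    then show "x \<in> B" using c unfolding B_def D_def by simp
  qed
  have zero: "\<forall>x\<in>B - (\<lambda>c. p * c) ` A. moebius x = 0"
  proof
    fix x assume x: "x \<in> B - (\<lambda>c. p * c) ` A"
    then obtain c where c: "x = p * c" unfolding B_def by auto
    have "c dvd N" using x c unfolding B_def D_def by (auto intro: dvd_mult_right)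
    then have "p dvd c" using x c unfolding A_def D_def by auto
    then have "p ^ 2 dvd x" using c by (auto simp: power2_eq_square)
    then have "\<not> squarefree x" using p unfolding squarefree_def by auto
    then show "moebius x = 0" by (simp add: moebius_def)
  qed
  have finB: "finite B" using fin unfolding B_def by simp
  have "sum moebius B = sum moebius ((\<lambda>c. p * c) ` A)"
    using sum.mono_neutral_left[OF finB sub zero] by simp
  also have "\<dots> = (\<Sum>c\<in>A. moebius (p * c))"
    using p by (subst sum.reindex) (auto simp: inj_on_def)
  also have "\<dots> = (\<Sum>c\<in>A. - moebius c)"
    using p Apos unfolding A_def by (intro sum.cong refl moebius_mult_prime) auto
  finally have "sum moebius D = 0" using sD by (simp add: sum_negf)
  then show ?thesis using False unfolding D_def by simp
qed

lemma powi_sum: "x \<noteq> 0 \<Longrightarrow> (\<Prod>i\<in>S. x powi f i) = x powi (\<Sum>i\<in>S. f i)" for x :: "rat fls"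
  by (induction S rule: infinite_finite_induct) (auto simp: power_int_add)

lemma cyclo_alt: "cyclo d = (\<Prod>e | e dvd d. qb e powi moebius (d div e))"
  by (simp add: cyclo_def qbr_def)

lemma cyclo_prod: assumes n: "n > 0" shows "(\<Prod>d | d dvd n. cyclo d) = qb n"
proof -
  let ?D = "\<lambda>n. {d::nat. d dvd n}"
  have fin: "finite (?D n)" using n by simp
  have "(\<Prod>d\<in>?D n. cyclo d) = (\<Prod>d\<in>?D n. \<Prod>e\<in>{e \<in> ?D n. e dvd d}. qb e powi moebius (d div e))"
    unfolding cyclo_alt
  proof (rule prod.cong[OF refl])
    fix d assume "d \<in> ?D n"
    then have "{e. e dvd d} = {e \<in> ?D n. e dvd d}" by (auto intro: dvd_trans)
    then show "(\<Prod>e | e dvd d. qb e powi moebius (d div e)) =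
      (\<Prod>e\<in>{e \<in> ?D n. e dvd d}. qb e powi moebius (d div e))" by simp
  qed
  also have "\<dots> = (\<Prod>e\<in>?D n. \<Prod>d | d \<in> ?D n \<and> e dvd d. qb e powi moebius (d div e))"
    by (rule prod.swap_restrict[OF fin fin])
  also have "\<dots> = (\<Prod>e\<in>?D n. qb e powi (if e = n then 1 else 0))"
  proof (intro prod.cong refl)
    fix e assume e: "e \<in> ?D n"
    then have epos: "e > 0" using n by (auto intro!: Nat.gr0I)
    have "(\<Prod>d | d \<in> ?D n \<and> e dvd d. qb e powi moebius (d div e)) =
       qb e powi (\<Sum>d | d \<in> ?D n \<and> e dvd d. moebius (d div e))"
      using qb_nonzero[OF epos] by (rule powi_sum)
    also have "(\<Sum>d | d \<in> ?D n \<and> e dvd d. moebius (d div e)) = (\<Sum>c \<in> ?D (n div e). moebius c)"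
    proof -
      have ne: "n = e * (n div e)" using e by simp
      have img: "{d. d \<in> ?D n \<and> e dvd d} = (\<lambda>c. e * c) ` ?D (n div e)"
      proof (intro set_eqI iffI)
        fix d assume "d \<in> {d. d \<in> ?D n \<and> e dvd d}"
        then obtain c where c: "d = e * c" "e * c dvd e * (n div e)" using ne by auto
        then have "c dvd n div e" using epos by simp
        then show "d \<in> (\<lambda>c. e * c) ` ?D (n div e)" using c by auto
      next
        fix d assume "d \<in> (\<lambda>c. e * c) ` ?D (n div e)"
        then obtain c where c: "d = e * c" "c dvd n div e" by auto
        then have "e * c dvd e * (n div e)" by simp
        then show "d \<in> {d. d \<in> ?D n \<and> e dvd d}" using c ne by auto
      qed
      show ?thesis unfolding img using epos by (subst sum.reindex) (auto simp: inj_on_def)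
    qed
    also have "\<dots> = (if e = n then 1 else 0)"
    proof -
      have "n div e > 0" using e n epos by (auto simp: div_greater_zero_iff intro!: dvd_imp_le)
      moreover have "n div e = 1 \<longleftrightarrow> e = n"
      proof
        assume "n div e = 1"
        moreover have "n = e * (n div e)" using e by simp
        ultimately show "e = n" by simp
      next
        assume "e = n" then show "n div e = 1" using n by simp
      qed
      ultimately show ?thesis using moebius_sum[of "n div e"] by simp
    qed
    finally show "(\<Prod>d | d \<in> ?D n \<and> e dvd d. qb e powi moebius (d div e)) = qb e powi (if e = n then 1 else 0)" .
  qed
  also have "\<dots> = (\<Prod>e\<in>?D n. if e = n then qb e else 1)"
    by (intro prod.cong refl) auto
  also have "\<dots> = qb n" using fin by (subst prod.delta) auto
  finally show ?thesis .
qed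

lemma cyclo_nonzero: assumes "m > 0" shows "cyclo m \<noteq> 0"
proof
  assume "cyclo m = 0"
  moreover have "m \<in> {d. d dvd m}" by simp
  moreover have "finite {d. d dvd m}" using assms by simp
  ultimately have "(\<Prod>d | d dvd m. cyclo d) = 0" by (metis prod_zero_iff)
  then show False using cyclo_prod[OF assms] qb_nonzero[OF assms] by simp
qed




lemma inv_qb_ZC: assumes e: "e > 0" shows "inverse (qb e) \<in> ZC"
proof -
  define S :: "rat fls" where "S = fps_to_fls (Abs_fps (\<lambda>n. if e dvd n then 1 else 0))"
  have Sn: "S $$ n = (if n < 0 then 0 else if e dvd nat n then 1 else 0)" for n
    unfolding S_def by simp
  have "qb e * (- S) = 1"
  proof (rule fls_eqI)
    fix n
    have X: "fls_X_intpow (int e) * S = fls_shift (- int e) S" by (simp add: fls_X_intpow_times_conv_shift)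
    have "qb e * (- S) = S - fls_X_intpow (int e) * S" unfolding qbr_def by (simp add: algebra_simps)
    then have "(qb e * (- S)) $$ n = S $$ n - S $$ (n - int e)" by (simp add: X)
    also have "\<dots> = (1::rat fls) $$ n"
    proof (cases "n < 0")
      case True then show ?thesis by (simp add: Sn)
    next
      case False
      then obtain m where m: "n = int m" by (metis nonneg_eq_int not_less)
      show ?thesis
      proof (cases "m < e")
        case True
        then have "\<not> e dvd m \<or> m = 0" by (auto dest: dvd_imp_le)
        then show ?thesis using True m by (auto simp: Sn)
      next
        case False
        then have "nat (int m - int e) = m - e" using m by simp
        moreover have "e dvd (m - e) \<longleftrightarrow> e dvd m" using False
          by (metis dvd_add_right_iff le_add_diff_inverse not_less dvd_refl)
        ultimately show ?thesis using m False e by (auto simp: Sn)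
      qed
    qed
    finally show "(qb e * (- S)) $$ n = (1::rat fls) $$ n" .
  qed
  then have "inverse (qb e) = - S" by (rule inverse_unique)
  moreover have "- S \<in> ZC" unfolding ZC_def by (simp add: Sn)
  ultimately show ?thesis by simp
qed

lemma cyclo_ZC: assumes m: "m > 0" shows "cyclo m \<in> ZC"
  unfolding cyclo_alt
proof (rule subr_prod[OF subr_ZC])
  fix e assume "e \<in> {e. e dvd m}"
  then have e: "e > 0" using m by (auto intro!: Nat.gr0I)
  show "qb e powi moebius (m div e) \<in> ZC"
  proof (cases "moebius (m div e) \<ge> 0")
    case True
    then have "qb e powi moebius (m div e) = qb e ^ nat (moebius (m div e))"
      by (metis nat_0_le power_int_of_nat)
    then show ?thesis using subr_power[OF subr_ZC qb_in[OF subr_ZC]] by simp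
  next
    case False
    then have "qb e powi moebius (m div e) = inverse (qb e) ^ nat (- moebius (m div e))"
      by (metis neg_0_le_iff_le nat_0_le power_int_minus power_int_of_nat power_inverse minus_minus linorder_linear)
    then show ?thesis using subr_power[OF subr_ZC inv_qb_ZC[OF e]] by simp
  qed
qed

definition Aq :: "nat \<Rightarrow> nat \<Rightarrow> rat fls" where
  "Aq e g = (\<Prod>c | c dvd e \<and> \<not> c dvd g. cyclo c)"

lemma quot: assumes g: "g > 0" "g dvd e" and e: "e > 0" shows "qb e = qb g * Aq e g"
proof -
  have eq: "{c. c dvd e} = {c. c dvd g} \<union> {c. c dvd e \<and> \<not> c dvd g}" using dvd_trans[OF _ g(2)] by blast
  have fin: "finite {c. c dvd g}" "finite {c. c dvd e \<and> \<not> c dvd g}" using g e by auto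
  have "qb e = (\<Prod>c | c dvd e. cyclo c)" using cyclo_prod[OF e] by simp
  also have "\<dots> = (\<Prod>c | c dvd g. cyclo c) * Aq e g"
    unfolding eq Aq_def by (rule prod.union_disjoint[OF fin]) auto
  also have "\<dots> = qb g * Aq e g" using cyclo_prod[OF g(1)] by simp
  finally show ?thesis .
qed

lemma Aq_in: "subr R \<Longrightarrow> (\<And>c. c dvd e \<Longrightarrow> cyclo c \<in> R) \<Longrightarrow> Aq e g \<in> R"
  unfolding Aq_def by (rule subr_prod) auto

lemma cyclo_dv_Aq: assumes R: "subr R" and e: "e > 0" "\<not> e dvd g"
  and cR: "\<And>c. c dvd e \<Longrightarrow> cyclo c \<in> R"
  shows "dv R (cyclo e) (Aq e g)"
proof -
  have fin: "finite {c. c dvd e \<and> \<not> c dvd g}" using e by auto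
  have "Aq e g = cyclo e * (\<Prod>c \<in> {c. c dvd e \<and> \<not> c dvd g} - {e}. cyclo c)"
    unfolding Aq_def using e by (subst prod.remove[OF fin]) auto
  then show ?thesis unfolding dv_def using cR by (auto intro!: subr_prod[OF R])
qed

lemma cyclo_dv_qb: assumes R: "subr R" and e: "e > 0"
  and cR: "\<And>c. c dvd e \<Longrightarrow> cyclo c \<in> R"
  shows "dv R (cyclo e) (qb e)"
proof -
  have fin: "finite {c. c dvd e}" using e by auto
  have "(\<Prod>c | c dvd e. cyclo c) = cyclo e * (\<Prod>c \<in> {c. c dvd e} - {e}. cyclo c)"
    by (rule prod.remove[OF fin]) simp
  then have "qb e = cyclo e * (\<Prod>c \<in> {c. c dvd e} - {e}. cyclo c)"
    using cyclo_prod[OF e] by simp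
  then show ?thesis unfolding dv_def using cR by (auto intro!: subr_prod[OF R])
qed

lemma gcd_facts: fixes d e :: nat assumes "d > 0" "\<not> e dvd d"
  shows "gcd d e > 0" "gcd d e dvd e" "gcd d e dvd d" "\<not> e dvd gcd d e"
proof -
  show "gcd d e > 0" using assms by simp
  show "gcd d e dvd e" by (rule gcd_dvd2)
  show "gcd d e dvd d" by (rule gcd_dvd1)
  show "\<not> e dvd gcd d e"
  proof
    assume "e dvd gcd d e"
    then have "e dvd d" using gcd_dvd1 by (rule dvd_trans)
    with assms show False by simp
  qed
qed

lemma cmx_cyclo_Z: assumes R: "subr R" and d: "d > 0" "m > 0" "\<not> d dvd m" "\<not> m dvd d"
  and cR: "\<And>c. c dvd d \<or> c dvd m \<Longrightarrow> cyclo c \<in> R"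
  shows "cmx R (cyclo d) (cyclo m)"
proof -
  define g where "g = gcd d m"
  have g: "g > 0" "g dvd m" "g dvd d" "\<not> m dvd g" "\<not> d dvd g"
    using gcd_facts[of d m] gcd_facts[of m d] d unfolding g_def gcd.commute[of m d] by auto
  obtain u v where uv: "u \<in> R" "v \<in> R" "u * qb d + v * qb m = qb g"
    using euclid_aux[OF R, of d m] unfolding g_def by auto
  have "qb g * (u * Aq d g + v * Aq m g) = u * (qb g * Aq d g) + v * (qb g * Aq m g)"
    by (simp add: algebra_simps)
  also have "\<dots> = u * qb d + v * qb m"
    using quot[OF g(1) g(3) d(1)] quot[OF g(1) g(2) d(2)] by simp
  also have "\<dots> = qb g * 1" using uv(3) by simp
  finally have "qb g * (u * Aq d g + v * Aq m g) = qb g * 1" .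
  then have "u * Aq d g + v * Aq m g = 1" by (rule mult_left_cancel[OF qb_nonzero[OF g(1)], THEN iffD1])
  then have "cmx R (Aq d g) (Aq m g)" unfolding cmx_def using uv by blast
  then show ?thesis
    using cyclo_dv_Aq[OF R d(1) g(5)] cyclo_dv_Aq[OF R d(2) g(4)] cR by (intro cmx_dv[OF R \<open>cmx R (Aq d g) (Aq m g)\<close>]) auto
qed

lemma cmx_cyclo_Q: assumes d: "d > 0" "e > 0" "\<not> e dvd d"
  and cR: "\<And>c. c dvd d \<or> c dvd e \<Longrightarrow> cyclo c \<in> FS"
  shows "cmx FS (cyclo d) (cyclo e)"
proof -
  define g where "g = gcd d e"
  have g: "g > 0" "g dvd e" "g dvd d" "\<not> e dvd g"
    using gcd_facts[of d e] d unfolding g_def by auto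
  obtain u v where uv: "u \<in> FS" "v \<in> FS" "u * qb d + v * qb e = qb g"
    using euclid_aux[OF subr_FS, of d e] unfolding g_def by auto
  define k where "k = e div g"
  have ek: "e = g * k" using g unfolding k_def by simp
  have k: "k > 0" using ek d by (auto intro!: Nat.gr0I)
  let ?y = "fls_X_intpow (int g) :: rat fls"
  obtain s where s: "s \<in> FS" "?y ^ k - 1 = (?y - 1) * (of_nat k + (?y - 1) * s)"
    using geom1[OF subr_FS subr_X[OF subr_FS], of "int g" k] by auto
  have qe: "qb e = qb g * (of_nat k + qb g * s)"
    using s(2) unfolding ek qb_mult by (simp add: qbr_def)
  have "qb g * Aq e g = qb g * (of_nat k + qb g * s)" using qe quot[OF g(1) g(2) d(2)] by simp
  then have A: "Aq e g = of_nat k + qb g * s" by (rule mult_left_cancel[OF qb_nonzero[OF g(1)], THEN iffD1])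
  define ik :: "rat fls" where "ik = fls_const (inverse (of_nat k))"
  have ik: "ik * of_nat k = 1" using k unfolding ik_def by (simp add: fls_of_nat)
  have "1 = ik * Aq e g - ik * s * qb g" using ik A by (simp add: algebra_simps)
  also have "\<dots> = ik * Aq e g - ik * s * (u * qb d + v * qb e)" using uv(3) by simp
  also have "\<dots> = (ik - ik * s * v * qb g) * Aq e g + (- (ik * s * u)) * qb d"
    using quot[OF g(1) g(2) d(2)] by (simp add: algebra_simps)
  finally have "cmx FS (Aq e g) (qb d)" unfolding cmx_def using uv s FS_const[of "inverse (of_nat k)"]
    by (intro bexI[of _ "ik - ik * s * v * qb g"] bexI[of _ "- (ik * s * u)"])
       (auto simp: ik_def intro!: subr_diff[OF subr_FS] subr_mult[OF subr_FS] subr_uminus[OF subr_FS] qb_in[OF subr_FS])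
  then have "cmx FS (qb d) (Aq e g)" by (rule cmx_sym)
  then show ?thesis
    using cyclo_dv_Aq[OF subr_FS d(2) g(4)] cyclo_dv_qb[OF subr_FS d(1)] cR
    by (intro cmx_dv[OF subr_FS \<open>cmx FS (qb d) (Aq e g)\<close>]) auto
qed

lemma cyclo_FS: "m > 0 \<Longrightarrow> cyclo m \<in> FS"
proof (induction m rule: less_induct)
  case (less m)
  define D' where "D' = {d. d dvd m} - {m}"
  have IH: "cyclo c \<in> FS" if "c dvd m" "c \<noteq> m" for c
  proof -
    have "c > 0" using that less.prems by (auto intro!: Nat.gr0I)
    moreover have "c < m" using that less.prems dvd_imp_le by fastforce
    ultimately show ?thesis using less.IH by blast
  qed
  have finD': "finite D'" using less.prems unfolding D'_def by auto
  have pos: "d > 0" if "d \<in> D'" for d using that less.prems unfolding D'_def by (auto intro!: Nat.gr0I)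
  have sub: "c dvd m \<and> c \<noteq> m" if "d \<in> D'" "c dvd d" for c d
  proof -
    have "d < m" using that less.prems dvd_imp_le unfolding D'_def by fastforce
    moreover have "c \<le> d" using that pos dvd_imp_le by blast
    moreover have "c dvd m" using that dvd_trans[of c d m] unfolding D'_def by blast
    ultimately show ?thesis by simp
  qed
  have dvP: "dv FS (prod cyclo D') (qb m)"
  proof (rule dv_prod[OF subr_FS finD'])
    fix d assume d: "d \<in> D'"
    show "cyclo d \<in> FS" using d IH unfolding D'_def by auto
    have cRd: "cyclo c \<in> FS" if "c dvd d" for c
      using sub[OF d that] IH by blast
    have 1: "dv FS (cyclo d) (qb d)" by (rule cyclo_dv_qb[OF subr_FS pos[OF d] cRd])
    have 2: "dv FS (qb d) (qb m)" using d unfolding D'_def by (intro qb_dv[OF subr_FS]) simp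
    show "dv FS (cyclo d) (qb m)" by (rule dv_trans[OF subr_FS 1 2])
  next
    show "qb m \<in> FS" by (rule qb_in[OF subr_FS])
  next
    fix d d' assume dd: "d \<in> D'" "d' \<in> D'" "d \<noteq> d'"
    have cR: "cyclo c \<in> FS" if "c dvd d \<or> c dvd d'" for c
    proof -
      have "c dvd m \<and> c \<noteq> m" using that sub[OF dd(1)] sub[OF dd(2)] by blast
      then show ?thesis using IH by blast
    qed
    have cR': "cyclo c \<in> FS" if "c dvd d' \<or> c dvd d" for c using that cR by blast
    show "cmx FS (cyclo d) (cyclo d')"
    proof (cases "d' dvd d")
      case False then show ?thesis by (rule cmx_cyclo_Q[OF pos[OF dd(1)] pos[OF dd(2)] _ cR])
    next
      case True
      then have "\<not> d dvd d'" using dd by (auto dest: dvd_antisym)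
      then show ?thesis by (rule cmx_sym[OF cmx_cyclo_Q[OF pos[OF dd(2)] pos[OF dd(1)] _ cR']])
    qed
  qed
  obtain w where w: "w \<in> FS" "qb m = prod cyclo D' * w" using dvP unfolding dv_def by auto
  have fin: "finite {d. d dvd m}" using less.prems by auto
  have "(\<Prod>c | c dvd m. cyclo c) = cyclo m * prod cyclo D'"
    unfolding D'_def by (rule prod.remove[OF fin]) simp
  then have "qb m = cyclo m * prod cyclo D'"
    using cyclo_prod[OF less.prems] by simp
  moreover have "prod cyclo D' \<noteq> 0" using finD' pos cyclo_nonzero by auto
  ultimately have "cyclo m = w" using w(2) by (metis mult.commute mult_left_cancel[OF \<open>prod cyclo D' \<noteq> 0\<close>])
  then show ?case using w by simp
qed

lemma cyclo_LP: "m > 0 \<Longrightarrow> cyclo m \<in> LP"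
  using cyclo_FS cyclo_ZC LP_eq by auto




lemma div_sum_le: fixes x y d :: nat assumes d: "d > 0"
  shows "(x + y + 1) div d \<le> x div d + y div d + 1"
proof -
  have x: "x < d * (x div d) + d" using d by (metis mod_less_divisor div_mult_mod_eq add_less_mono1 mult.commute add.commute nat_add_left_cancel_less)
  have y: "y < d * (y div d) + d" using d by (metis mod_less_divisor div_mult_mod_eq add_less_mono1 mult.commute add.commute nat_add_left_cancel_less)
  have "x + y + 1 < d * (x div d + y div d + 2)" using x y by (simp add: algebra_simps)
  then have "(x + y + 1) div d < x div d + y div d + 2"
    using d by (simp add: div_less_iff_less_mult mult.commute)
  then show ?thesis by simp
qed

lemma div_sum_eq: fixes x y d :: nat assumes d: "d > 0" and dv: "d dvd y + 1"
  shows "(x + y + 1) div d = x div d + y div d + 1"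
proof -
  obtain c where c: "y + 1 = d * c" using dv by auto
  then have c0: "c > 0" by (cases c) auto
  have "y div d = c - 1"
  proof -
    have "y = d * (c - 1) + (d - 1)" using c c0 d by (cases c) (auto simp: algebra_simps)
    then show ?thesis using d by (metis add.commute div_mult_self2 div_less diff_less less_numeral_extra(1) add_0 not_gr0)
  qed
  have "x + y + 1 = x + d * c" using c by simp
  then have "(x + y + 1) div d = (x + d * c) div d" by (simp only:)
  also have "\<dots> = x div d + c" using d by simp
  finally show ?thesis using \<open>y div d = c - 1\<close> c0 by simp
qed

definition PP :: "nat \<Rightarrow> (nat \<Rightarrow> nat) \<Rightarrow> rat fls" where
  "PP N e = (\<Prod>d\<in>{1..N}. cyclo d ^ e d)"

lemma PP_LP: "PP N e \<in> LP"
  unfolding PP_def by (intro subr_prod[OF subr_LP] subr_power[OF subr_LP] cyclo_LP) auto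

lemma PP_mult: "PP N e * PP N e' = PP N (\<lambda>d. e d + e' d)"
  unfolding PP_def by (simp add: power_add prod.distrib)

lemma PP_nonzero: "PP N e \<noteq> 0"
  unfolding PP_def using cyclo_nonzero by auto

lemma PP_cong: "(\<And>d. 1 \<le> d \<Longrightarrow> d \<le> N \<Longrightarrow> e d = e' d) \<Longrightarrow> PP N e = PP N e'"
  unfolding PP_def by (intro prod.cong refl) auto

lemma qfact_Suc: "qfact (Suc n) = qfact n * qb (Suc n)"
proof -
  have "qfact (Suc n) = (\<Prod>j<Suc n. qbr (int (Suc n) - int j))" unfolding qfact_def qbrn_def by simp
  also have "\<dots> = qbr (int (Suc n)) * (\<Prod>j<n. qbr (int (Suc n) - int (Suc j)))"
    by (subst prod.lessThan_Suc_shift) simp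
  also have "(\<Prod>j<n. qbr (int (Suc n) - int (Suc j))) = qfact n"
    unfolding qfact_def qbrn_def by simp
  finally show ?thesis by simp
qed

lemma qb_PP: assumes "Suc n \<le> N" shows "qb (Suc n) = PP N (\<lambda>d. if d dvd Suc n then 1 else 0)"
proof -
  have "PP N (\<lambda>d. if d dvd Suc n then 1 else 0) = (\<Prod>d\<in>{1..N}. if d dvd Suc n then cyclo d else 1)"
    unfolding PP_def by (intro prod.cong refl) auto
  also have "\<dots> = (\<Prod>d\<in>{d \<in> {1..N}. d dvd Suc n}. cyclo d)"
    by (rule prod.inter_filter[symmetric]) simp
  also have "{d \<in> {1..N}. d dvd Suc n} = {d. d dvd Suc n}"
  proof -
    have "1 \<le> x" if "x dvd Suc n" for x using that by (cases x) auto
    then show ?thesis using assms by (auto dest: dvd_imp_le)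
  qed
  also have "(\<Prod>d | d dvd Suc n. cyclo d) = qb (Suc n)" by (rule cyclo_prod) simp
  finally show ?thesis by simp
qed

lemma qfact_PP: "n \<le> N \<Longrightarrow> qfact n = PP N (\<lambda>d. n div d)"
proof (induction n)
  case 0
  then show ?case by (simp add: qfact_def qbrn_def PP_def)
next
  case (Suc n)
  have "qfact (Suc n) = PP N (\<lambda>d. n div d) * PP N (\<lambda>d. if d dvd Suc n then 1 else 0)"
    using Suc qfact_Suc qb_PP by simp
  also have "\<dots> = PP N (\<lambda>d. Suc n div d)"
    unfolding PP_mult
  proof (rule PP_cong)
    fix d :: nat assume "1 \<le> d"
    then show "n div d + (if d dvd Suc n then 1 else 0) = Suc n div d"
      by (auto simp: div_Suc dvd_eq_mod_eq_0)
  qed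
  finally show ?case .
qed

definition tt :: "nat \<Rightarrow> nat \<Rightarrow> nat" where "tt l d = (l + 1) div d - 1"
definition dl :: "nat \<Rightarrow> nat \<Rightarrow> nat \<Rightarrow> nat" where
  "dl l k d = (l - k) div d + k div d - tt l d"
definition hk :: "nat \<Rightarrow> nat \<Rightarrow> rat fls" where "hk l k = PP l (dl l k)"

lemma G_eq: "(\<Prod>m\<in>{1..l}. cyclo m powi texp l m) = PP l (tt l)"
  unfolding PP_def
proof (intro prod.cong refl)
  fix m assume m: "m \<in> {1..l}"
  then have "(l + 1) div m \<ge> 1" by (auto simp: div_greater_zero_iff Suc_le_eq)
  moreover have "texp l m = int ((l + 1) div m) - 1" using m unfolding texp_def
    using floor_divide_of_nat_eq[of "l + 1" m] by simp
  ultimately have "texp l m = int (tt l m)" unfolding tt_def by simp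
  then show "cyclo m powi texp l m = cyclo m ^ tt l m" by (simp add: power_int_of_nat)
qed

lemma fq_eq: assumes "k \<le> l" shows "fq l k = PP l (tt l) * hk l k"
proof -
  have "fq l k = PP l (\<lambda>d. (l - k) div d) * PP l (\<lambda>d. k div d)"
    unfolding fq_def using assms by (simp add: qfact_PP)
  also have "\<dots> = PP l (\<lambda>d. tt l d + dl l k d)"
    unfolding PP_mult
  proof (rule PP_cong)
    fix d :: nat assume "1 \<le> d"
    then have "(l - k + k + 1) div d \<le> (l - k) div d + k div d + 1" by (intro div_sum_le) simp
    then show "(l - k) div d + k div d = tt l d + dl l k d"
      using assms unfolding tt_def dl_def by simp
  qed
  also have "\<dots> = PP l (tt l) * hk l k" unfolding hk_def PP_mult by simp
  finally show ?thesis .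
qed

lemma dl_zero: assumes "1 \<le> d" "d dvd k + 1" "k \<le> l" shows "dl l k d = 0"
proof -
  have "(l - k + k + 1) div d = (l - k) div d + k div d + 1" using assms by (intro div_sum_eq) auto
  then show ?thesis using assms unfolding dl_def tt_def by simp
qed




definition JJ :: "nat \<Rightarrow> rat fls set" where
  "JJ l = {x. \<exists>c. (\<forall>k\<le>l. c k \<in> LP) \<and> x = (\<Sum>k\<le>l. c k * hk l k)}"

lemma JJ_add: assumes "x \<in> JJ l" "y \<in> JJ l" shows "x + y \<in> JJ l"
proof -
  obtain c where c: "\<forall>k\<le>l. c k \<in> LP" "x = (\<Sum>k\<le>l. c k * hk l k)" using assms(1) JJ_def by auto
  obtain c' where c': "\<forall>k\<le>l. c' k \<in> LP" "y = (\<Sum>k\<le>l. c' k * hk l k)" using assms(2) JJ_def by auto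
  have "x + y = (\<Sum>k\<le>l. (c k + c' k) * hk l k)" using c c' by (simp add: sum.distrib algebra_simps)
  then show ?thesis unfolding JJ_def using c c' by (auto intro!: exI[of _ "\<lambda>k. c k + c' k"] subr_add[OF subr_LP])
qed

lemma JJ_mult: assumes "x \<in> JJ l" "y \<in> LP" shows "y * x \<in> JJ l"
proof -
  obtain c where c: "\<forall>k\<le>l. c k \<in> LP" "x = (\<Sum>k\<le>l. c k * hk l k)" using assms(1) JJ_def by auto
  have "y * x = (\<Sum>k\<le>l. (y * c k) * hk l k)" using c by (simp add: sum_distrib_left algebra_simps)
  then show ?thesis unfolding JJ_def using c assms by (auto intro!: exI[of _ "\<lambda>k. y * c k"] subr_mult[OF subr_LP])
qed

lemma JJ_hk: assumes "k \<le> l" shows "hk l k \<in> JJ l"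
proof -
  have "(\<Sum>j\<le>l. (if j = k then 1 else 0) * hk l j) = (\<Sum>j\<le>l. if j = k then hk l j else 0)"
    by (intro sum.cong) auto
  also have "\<dots> = hk l k" using assms by (simp add: sum.delta)
  finally have "hk l k = (\<Sum>j\<le>l. (if j = k then 1 else 0) * hk l j)" by simp
  then show ?thesis unfolding JJ_def
    by (intro CollectI exI[of _ "\<lambda>j. if j = k then 1 else 0"]) (auto intro: subr_one[OF subr_LP] subr_zero[OF subr_LP])
qed

lemma hk_LP: "hk l k \<in> LP" by (simp add: hk_def PP_LP)

lemma JJ_LP: "x \<in> JJ l \<Longrightarrow> x \<in> LP"
  unfolding JJ_def hk_def by (auto intro!: subr_sum[OF subr_LP] subr_mult[OF subr_LP] PP_LP)

definition Cm :: "nat \<Rightarrow> rat fls \<Rightarrow> rat fls \<Rightarrow> bool" where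
  "Cm l b a \<longleftrightarrow> (\<exists>x\<in>JJ l. \<exists>y\<in>LP. \<exists>z\<in>LP. x + b * z + a * y = 1)"

lemma JJ_zero: "0 \<in> JJ l"
  unfolding JJ_def by (intro CollectI exI[of _ "\<lambda>_. 0"]) (auto intro: subr_zero[OF subr_LP])

lemma Cm_one: "Cm l b 1"
  unfolding Cm_def using JJ_zero subr_zero[OF subr_LP] subr_one[OF subr_LP] by force

lemma Cm_mult: assumes "b \<in> LP" "a1 \<in> LP" "a2 \<in> LP" "Cm l b a1" "Cm l b a2" shows "Cm l b (a1 * a2)"
proof -
  obtain x1 y1 z1 where 1: "x1 \<in> JJ l" "y1 \<in> LP" "z1 \<in> LP" "x1 + b * z1 + a1 * y1 = 1" using assms(4) Cm_def by auto
  obtain x2 y2 z2 where 2: "x2 \<in> JJ l" "y2 \<in> LP" "z2 \<in> LP" "x2 + b * z2 + a2 * y2 = 1" using assms(5) Cm_def by auto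
  let ?W = "x2 + b * z2 + a2 * y2"
  have "(?W * x1 + (b * z1 + a1 * y1) * x2) + b * (z1 * (b * z2 + a2 * y2) + a1 * y1 * z2) + (a1 * a2) * (y1 * y2)
      = (x1 + b * z1 + a1 * y1) * (x2 + b * z2 + a2 * y2)" by (simp add: algebra_simps)
  also have "\<dots> = 1" using 1 2 by simp
  finally have eq: "(?W * x1 + (b * z1 + a1 * y1) * x2) + b * (z1 * (b * z2 + a2 * y2) + a1 * y1 * z2) + (a1 * a2) * (y1 * y2) = 1" .
  have LP1: "?W \<in> LP" "b * z1 + a1 * y1 \<in> LP" using 1 2 assms JJ_LP subr_one[OF subr_LP] by (auto intro!: subr_add[OF subr_LP] subr_mult[OF subr_LP])
  show ?thesis unfolding Cm_def
    apply (rule bexI[of _ "?W * x1 + (b * z1 + a1 * y1) * x2"])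
     apply (rule bexI[of _ "y1 * y2"])
      apply (rule bexI[of _ "z1 * (b * z2 + a2 * y2) + a1 * y1 * z2"])
    using eq apply simp
    using 1 2 assms subr_one[OF subr_LP] by (auto intro!: subr_add[OF subr_LP] subr_mult[OF subr_LP] JJ_add JJ_mult LP1)
qed

lemma Cm_power: "b \<in> LP \<Longrightarrow> a \<in> LP \<Longrightarrow> Cm l b a \<Longrightarrow> Cm l b (a ^ n)"
  by (induction n) (auto simp: Cm_one intro!: Cm_mult subr_power[OF subr_LP])

lemma Cm_prod: assumes b: "b \<in> LP" and "finite S" and "\<And>d. d \<in> S \<Longrightarrow> a d \<in> LP"
  and "\<And>d. d \<in> S \<Longrightarrow> n d = 0 \<or> Cm l b (a d)"
  shows "Cm l b (\<Prod>d\<in>S. a d ^ n d)"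
  using assms(2-4)
proof (induction S rule: finite_induct)
  case empty then show ?case by (simp add: Cm_one)
next
  case (insert x F)
  have "n x = 0 \<or> Cm l b (a x)" using insert by simp
  moreover have "a x \<in> LP" using insert by simp
  ultimately have "Cm l b (a x ^ n x)" using Cm_power[OF b] by (auto simp: Cm_one)
  then show ?case using insert b
    by (auto intro!: Cm_mult subr_power[OF subr_LP] subr_prod[OF subr_LP])
qed

lemma Cm_mono: "Cm l 0 a \<Longrightarrow> Cm l b a"
  unfolding Cm_def using subr_zero[OF subr_LP] by force

lemma Cm_cmx: "cmx LP b a \<Longrightarrow> Cm l b a"
  unfolding Cm_def cmx_def using JJ_zero by (force simp: mult.commute)

lemma Cm_J: assumes "h \<in> JJ l" "h \<in> LP" "Cm l b h" shows "Cm l 0 b"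
proof -
  obtain x y z where xyz: "x \<in> JJ l" "y \<in> LP" "z \<in> LP" "x + b * z + h * y = 1" using assms(3) Cm_def by auto
  have "(x + y * h) + 0 * 0 + b * z = 1" using xyz by (simp add: algebra_simps)
  moreover have "x + y * h \<in> JJ l" using xyz assms by (intro JJ_add JJ_mult)
  ultimately show ?thesis unfolding Cm_def using xyz subr_zero[OF subr_LP] by blast
qed

lemma Cm_final: assumes "h \<in> JJ l" "Cm l 0 h" shows "1 \<in> JJ l"
proof -
  obtain x y z where xyz: "x \<in> JJ l" "y \<in> LP" "z \<in> LP" "x + 0 * z + h * y = 1" using assms(2) Cm_def by auto
  have "x + y * h \<in> JJ l" using xyz assms by (intro JJ_add JJ_mult)
  moreover have "x + y * h = 1" using xyz by (simp add: algebra_simps)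
  ultimately show ?thesis by simp
qed

lemma main_ind: "1 \<le> m \<Longrightarrow> m \<le> l \<Longrightarrow> Cm l 0 (cyclo m)"
proof (induction "l - m" arbitrary: m rule: less_induct)
  case less
  have m: "m > 0" using less.prems by simp
  have hk_eq: "hk l (m - 1) = (\<Prod>d\<in>{1..l}. cyclo d ^ dl l (m - 1) d)" unfolding hk_def PP_def ..
  have "Cm l (cyclo m) (hk l (m - 1))"
    unfolding hk_eq
  proof (rule Cm_prod[OF cyclo_LP[OF m]])
    fix d assume d: "d \<in> {1..l}"
    show "cyclo d \<in> LP" using d by (intro cyclo_LP) auto
    show "dl l (m - 1) d = 0 \<or> Cm l (cyclo m) (cyclo d)"
    proof (cases "d dvd m")
      case True
      then have "dl l (m - 1) d = 0" using d less.prems by (intro dl_zero) auto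
      then show ?thesis by simp
    next
      case False
      then have dm: "d \<noteq> m" by auto
      show ?thesis
      proof (cases "m < d")
        case True
        then have "Cm l 0 (cyclo d)" using less.hyps[of d] d less.prems by auto
        then show ?thesis by (simp add: Cm_mono)
      next
        case False2: False
        then have dlt: "d < m" using dm by simp
        then have "\<not> m dvd d" using d by (auto dest: dvd_imp_le)
        then have "cmx LP (cyclo d) (cyclo m)"
          using False d m by (intro cmx_cyclo_Z[OF subr_LP] cyclo_LP) (auto intro!: Nat.gr0I)
        then show ?thesis by (simp add: Cm_cmx cmx_sym)
      qed
    qed
  qed simp
  then show ?case using JJ_hk[of "m - 1" l] less.prems hk_LP by (intro Cm_J) auto
qed

lemma one_JJ: "1 \<in> JJ l"
proof -
  have hk_eq: "hk l l = (\<Prod>d\<in>{1..l}. cyclo d ^ dl l l d)" unfolding hk_def PP_def ..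
  have "Cm l 0 (hk l l)"
    unfolding hk_eq by (rule Cm_prod) (auto intro: main_ind cyclo_LP subr_zero[OF subr_LP])
  then show ?thesis using JJ_hk[of l l] by (intro Cm_final) auto
qed




theorem theorem3p1:
  fixes l :: nat
  shows "(\<exists>g. is_lgcd g l) \<and>
         (\<forall>g. is_lgcd g l \<longrightarrow>
              Iq l = {g * c | c. c \<in> LP} \<and>
              (\<exists>u. lunit u \<and> g = u * (\<Prod>m\<in>{1..l}. cyclo m powi texp l m)))"
proof -
  define G where "G = PP l (tt l)"
  have GP: "(\<Prod>m\<in>{1..l}. cyclo m powi texp l m) = G" using G_eq G_def by simp
  have GLP: "G \<in> LP" using PP_LP G_def by simp
  have G0: "G \<noteq> 0" using PP_nonzero G_def by simp
  have fqG: "fq l k = G * hk l k" if "k \<le> l" for k using fq_eq[OF that] G_def by simp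
  obtain c where c: "\<forall>k\<le>l. c k \<in> LP" "1 = (\<Sum>k\<le>l. c k * hk l k)"
    using one_JJ[of l] unfolding JJ_def by auto
  have GI: "G = (\<Sum>k\<le>l. c k * fq l k)"
  proof -
    have "G = G * (\<Sum>k\<le>l. c k * hk l k)" using c(2) by simp
    also have "\<dots> = (\<Sum>k\<le>l. c k * fq l k)"
      unfolding sum_distrib_left by (intro sum.cong refl) (simp add: fqG algebra_simps)
    finally show ?thesis .
  qed
  have Iq_eq: "Iq l = {G * c | c. c \<in> LP}"
  proof (intro set_eqI iffI)
    fix x assume "x \<in> Iq l"
    then obtain d where d: "\<forall>k\<le>l. d k \<in> LP" "x = (\<Sum>k\<le>l. d k * fq l k)" unfolding Iq_def by auto
    have "x = G * (\<Sum>k\<le>l. d k * hk l k)"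
      unfolding d(2) sum_distrib_left by (intro sum.cong refl) (simp add: fqG algebra_simps)
    moreover have "(\<Sum>k\<le>l. d k * hk l k) \<in> LP" using d(1) hk_LP
      by (intro subr_sum[OF subr_LP] subr_mult[OF subr_LP]) auto
    ultimately show "x \<in> {G * c | c. c \<in> LP}" by blast
  next
    fix x assume "x \<in> {G * c | c. c \<in> LP}"
    then obtain y where y: "y \<in> LP" "x = G * y" by auto
    have "x = y * G" using y(2) by (simp only: mult.commute)
    also have "\<dots> = y * (\<Sum>k\<le>l. c k * fq l k)" using GI by (rule arg_cong)
    also have "\<dots> = (\<Sum>k\<le>l. (y * c k) * fq l k)" by (simp add: sum_distrib_left mult.assoc)
    finally have xe: "x = (\<Sum>k\<le>l. (y * c k) * fq l k)" .
    have "\<forall>k\<le>l. y * c k \<in> LP" using y c by (auto intro: subr_mult[OF subr_LP])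
    then have "(\<forall>k\<le>l. y * c k \<in> LP) \<and> x = (\<Sum>k\<le>l. (y * c k) * fq l k)" using xe by (rule conjI)
    then have "\<exists>c'. (\<forall>k\<le>l. c' k \<in> LP) \<and> x = (\<Sum>k\<le>l. c' k * fq l k)" by (rule exI[of _ "\<lambda>k. y * c k"])
    then show "x \<in> Iq l" unfolding Iq_def by simp
  qed
  have divs: "\<forall>k\<le>l. ldvd G (fq l k)"
    unfolding ldvd_def using fqG hk_LP by blast
  have common: "ldvd d G" if d: "d \<in> LP" "\<forall>k\<le>l. ldvd d (fq l k)" for d
  proof -
    have "\<forall>k\<in>{..l}. \<exists>e. e \<in> LP \<and> fq l k = d * e" using d(2) unfolding ldvd_def by auto
    then obtain e where e: "\<forall>k\<in>{..l}. e k \<in> LP \<and> fq l k = d * e k" by (metis bchoice)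
    have "G = d * (\<Sum>k\<le>l. c k * e k)"
      unfolding GI sum_distrib_left by (intro sum.cong refl) (use e in \<open>simp add: algebra_simps\<close>)
    moreover have "(\<Sum>k\<le>l. c k * e k) \<in> LP" using c e
      by (intro subr_sum[OF subr_LP] subr_mult[OF subr_LP]) auto
    ultimately show ?thesis unfolding ldvd_def by blast
  qed
  have lg: "is_lgcd G l" unfolding is_lgcd_def using GLP divs common by blast
  show ?thesis
  proof (intro conjI allI impI)
    show "\<exists>g. is_lgcd g l" using lg by blast
  next
    fix g assume g: "is_lgcd g l"
    have gLP: "g \<in> LP" and gdiv: "\<forall>k\<le>l. ldvd g (fq l k)" using g unfolding is_lgcd_def by auto
    have "ldvd G g" using g GLP divs unfolding is_lgcd_def by blast
    then obtain a where a: "a \<in> LP" "g = G * a" unfolding ldvd_def by auto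
    have "ldvd g G" using common[OF gLP gdiv] .
    then obtain b where b: "b \<in> LP" "G = g * b" unfolding ldvd_def by auto
    have "G * (a * b) = (G * a) * b" by (simp add: mult.assoc)
    also have "\<dots> = g * b" using a(2) by simp
    also have "\<dots> = G * 1" using b(2) by simp
    finally have "G * (a * b) = G * 1" .
    then have ab: "a * b = 1" by (rule mult_left_cancel[OF G0, THEN iffD1])
    show "Iq l = {g * c | c. c \<in> LP}"
    proof (unfold Iq_eq, intro set_eqI iffI)
      fix x assume "x \<in> {G * c | c. c \<in> LP}"
      then obtain y where y: "y \<in> LP" "x = G * y" by auto
      have "x = g * (b * y)" using y b by (simp add: algebra_simps)
      moreover have "b * y \<in> LP" using y b by (intro subr_mult[OF subr_LP])
      ultimately show "x \<in> {g * c | c. c \<in> LP}" by blast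
    next
      fix x assume "x \<in> {g * c | c. c \<in> LP}"
      then obtain y where y: "y \<in> LP" "x = g * y" by auto
      have "x = G * (a * y)" using y a by (simp add: algebra_simps)
      moreover have "a * y \<in> LP" using y a by (intro subr_mult[OF subr_LP])
      ultimately show "x \<in> {G * c | c. c \<in> LP}" by blast
    qed
    have "lunit a" unfolding lunit_def using a b ab by blast
    moreover have "g = a * (\<Prod>m\<in>{1..l}. cyclo m powi texp l m)" using a GP by (simp add: mult.commute)
    ultimately show "\<exists>u. lunit u \<and> g = u * (\<Prod>m\<in>{1..l}. cyclo m powi texp l m)" by blast
  qed
qed



end
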